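(* Let $P$ be a planar cyclic polygon with positive edge lengths $l_1,\dots,l_n$ such that (1) no two consecutive vertices are antipodal with respect to the circumscribed circle, and (2) $P$ does not lie on a straight line. Then $P$ is a nondegenerate (Morse) critical point of the oriented area $\mathcal A$ on $\mathbf L(l_1,\dots,l_n)$ if and only if $P$ is not a bifurcating polygon, i.e. iff $\sum_{i=1}^n\varepsilon_i\tan\alpha_i\neq0$.
   Context: $\mathbf L(l_1,\dots,l_n)$ is the space of planar polygons (closed broken lines with cyclically numbered vertices $v_1,\dots,v_n$) with $|v_iv_{i+1}|=l_i$, modulo translations and rotations. The oriented area is $\mathcal A=\frac12\sum_i(x_iy_{i+1}-x_{i+1}y_i)$ for $v_i=(x_i,y_i)$. A polygon is cyclic if all vertices lie on a circle with center $O$. $\alpha_i$ is half of the unoriented positive angle between $\overrightarrow{Ov_i}$ and $\overrightarrow{Ov_{i+1}}$; $\varepsilon_i=1$ if $O$ lies to the left of $\overrightarrow{v_iv_{i+1}}$ and $-1$ if to the right. $P$ is bifurcating if $\sum_{i=1}^n\varepsilon_i\tan\alpha_i=0$. *)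

theory Defs
  imports "HOL-Analysis.Analysis"
begin

text \<open>A planar n-gon is given by its vertices v 0, ..., v (n-1) as complex numbers
  (the plane R^2 identified with C); indices are cyclic: the successor of vertex i is
  vertex (Suc i mod n). Values of v at indices >= n are irrelevant.\<close>

definition nxt :: "nat \<Rightarrow> nat \<Rightarrow> nat" where
  "nxt n i = Suc i mod n"

definition poly_area :: "nat \<Rightarrow> (nat \<Rightarrow> complex) \<Rightarrow> real" where
  "poly_area n v = (1/2) * (\<Sum>i<n. Re (v i) * Im (v (nxt n i)) - Re (v (nxt n i)) * Im (v i))"

text \<open>Side-length constraint functions: the configuration space of polygons with side
  lengths l is the common zero set of these, and L(l) is its quotient by translations and
  rotations.\<close>
definition side_constr :: "nat \<Rightarrow> (nat \<Rightarrow> real) \<Rightarrow> nat \<Rightarrow> (nat \<Rightarrow> complex) \<Rightarrow> real" where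
  "side_constr n l i w = (cmod (w (nxt n i) - w i))\<^sup>2 - (l i)\<^sup>2"

definition dderiv :: "((nat \<Rightarrow> complex) \<Rightarrow> real) \<Rightarrow> (nat \<Rightarrow> complex) \<Rightarrow> (nat \<Rightarrow> complex) \<Rightarrow> real" where
  "dderiv f v u = deriv (\<lambda>t. f (\<lambda>i. v i + of_real t * u i)) 0"

definition dderiv2 :: "((nat \<Rightarrow> complex) \<Rightarrow> real) \<Rightarrow> (nat \<Rightarrow> complex) \<Rightarrow> (nat \<Rightarrow> complex)
    \<Rightarrow> (nat \<Rightarrow> complex) \<Rightarrow> real" where
  "dderiv2 f v u w = deriv (\<lambda>s. deriv (\<lambda>t. f (\<lambda>i. v i + of_real t * u i + of_real s * w i)) 0) 0"

definition tangent_sp :: "nat \<Rightarrow> (nat \<Rightarrow> real) \<Rightarrow> (nat \<Rightarrow> complex) \<Rightarrow> (nat \<Rightarrow> complex) set" where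
  "tangent_sp n l v = {u. \<forall>i<n. dderiv (side_constr n l i) v u = 0}"

text \<open>Tangent space of the orbit of v under translations and rotations.\<close>
definition orbit_tangent :: "nat \<Rightarrow> (nat \<Rightarrow> complex) \<Rightarrow> (nat \<Rightarrow> complex) set" where
  "orbit_tangent n v = {u. \<exists>a::complex. \<exists>c::real. \<forall>i<n. u i = a + of_real c * \<i> * v i}"

text \<open>v represents a nondegenerate (Morse) critical point of the oriented area on L(l):
  v lies in the configuration space, it is a constrained critical point (Lagrange
  multipliers lam), and the Hessian of the Lagrangian restricted to the tangent space has
  radical exactly the orbit directions, i.e. the Hessian on the quotient L(l) is
  nondegenerate.\<close>
definition morse_critical_area :: "nat \<Rightarrow> (nat \<Rightarrow> real) \<Rightarrow> (nat \<Rightarrow> complex) \<Rightarrow> bool" where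
  "morse_critical_area n l v \<longleftrightarrow>
     (\<forall>i<n. side_constr n l i v = 0) \<and>
     (\<exists>lam :: nat \<Rightarrow> real.
        (\<forall>u. dderiv (poly_area n) v u = (\<Sum>i<n. lam i * dderiv (side_constr n l i) v u)) \<and>
        (\<forall>u \<in> tangent_sp n l v.
           (\<forall>w \<in> tangent_sp n l v.
              dderiv2 (poly_area n) v u w - (\<Sum>i<n. lam i * dderiv2 (side_constr n l i) v u w) = 0)
           \<longrightarrow> u \<in> orbit_tangent n v))"

definition cyclic_with_center :: "nat \<Rightarrow> (nat \<Rightarrow> complex) \<Rightarrow> complex \<Rightarrow> bool" where
  "cyclic_with_center n v ctr \<longleftrightarrow> (\<exists>r. \<forall>i<n. cmod (v i - ctr) = r)"

definition half_angle :: "nat \<Rightarrow> (nat \<Rightarrow> complex) \<Rightarrow> complex \<Rightarrow> nat \<Rightarrow> real" where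
  "half_angle n v ctr i =
     arccos (Re (cnj (v i - ctr) * (v (nxt n i) - ctr)) / (cmod (v i - ctr) * cmod (v (nxt n i) - ctr))) / 2"

text \<open>epsilon_i = 1 if ctr lies to the left of the directed edge v_i -> v_{i+1}, -1 if to the right
  (ctr never lies on the edge line under the hypotheses of the theorem).\<close>
definition eps_side :: "nat \<Rightarrow> (nat \<Rightarrow> complex) \<Rightarrow> complex \<Rightarrow> nat \<Rightarrow> real" where
  "eps_side n v ctr i = (if Im (cnj (v (nxt n i) - v i) * (ctr - v i)) > 0 then 1 else -1)"

definition bifurcating :: "nat \<Rightarrow> (nat \<Rightarrow> complex) \<Rightarrow> complex \<Rightarrow> bool" where
  "bifurcating n v ctr \<longleftrightarrow> (\<Sum>i<n. eps_side n v ctr i * tan (half_angle n v ctr i)) = 0"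

end

theory Submission
  imports Defs
begin

definition dt :: "complex \<Rightarrow> complex \<Rightarrow> real" where "dt a b = Re a * Re b + Im a * Im b"
definition cr :: "complex \<Rightarrow> complex \<Rightarrow> real" where "cr a b = Re a * Im b - Im a * Re b"

lemma nxt_lt: "0 < n \<Longrightarrow> nxt n k < n" by (simp add: nxt_def)
lemma nxt_Suc: "Suc k < n \<Longrightarrow> nxt n k = Suc k" by (simp add: nxt_def)
lemma nxt_last: "0 < n \<Longrightarrow> nxt n (n - 1) = 0" by (simp add: nxt_def)

lemma sum_shift: fixes f :: "nat \<Rightarrow> 'a::comm_monoid_add"
  assumes "0 < n" shows "(\<Sum>k<n. f (nxt n k)) = (\<Sum>k<n. f k)"
proof -
  obtain m where n: "n = Suc m" using assms by (cases n) auto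
  have "(\<Sum>k<n. f (nxt n k)) = (\<Sum>k<m. f (nxt n k)) + f (nxt n m)" by (simp add: n)
  also have "(\<Sum>k<m. f (nxt n k)) = (\<Sum>k<m. f (Suc k))"
    by (rule sum.cong) (auto simp: n nxt_def)
  also have "f (nxt n m) = f 0" by (simp add: n nxt_def)
  also have "(\<Sum>k<m. f (Suc k)) + f 0 = (\<Sum>k<n. f k)"
    unfolding n sum.lessThan_Suc_shift by (simp add: add.commute)
  finally show ?thesis .
qed

lemma prefix: fixes F :: "nat \<Rightarrow> 'a::ab_group_add"
  assumes "0 < n" "(\<Sum>m<n. F m) = 0" "k < n"
  shows "(\<Sum>m<nxt n k. F m) - (\<Sum>m<k. F m) = F k"
proof (cases "Suc k < n")
  case True then show ?thesis by (simp add: nxt_Suc)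
next
  case False
  then have k: "Suc k = n" using assms by auto
  have "(\<Sum>m<Suc k. F m) = 0" using assms k by simp
  moreover have "nxt n k = 0" using k by (simp add: nxt_def)
  ultimately show ?thesis by (simp add: add_eq_0_iff)
qed

lemma const_cyc: assumes "\<forall>k<n. \<phi> (nxt n k) = \<phi> k" shows "k < n \<Longrightarrow> \<phi> k = \<phi> 0"
proof (induction k)
  case 0 then show ?case by simp
next
  case (Suc k)
  then have "\<phi> (nxt n k) = \<phi> k" using assms by simp
  then show ?case using Suc by (simp add: nxt_Suc)
qed

lemma deriv_quad: fixes f :: "real \<Rightarrow> real"
  assumes "\<And>t. f t = a + b * t + c * t^2" shows "deriv f 0 = b"
proof -
  have e: "f = (\<lambda>t. a + b * t + c * t^2)" using assms by auto
  have "((\<lambda>t. a + b * t + c * t^2) has_real_derivative b) (at 0)"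
    by (auto intro!: derivative_eq_intros)
  then show ?thesis unfolding e by (simp add: DERIV_imp_deriv)
qed

lemma cr_line: "cr (a + of_real t * b) (c + of_real t * d) = cr a c + (cr a d + cr b c) * t + cr b d * t^2"
  unfolding cr_def by (simp add: algebra_simps power2_eq_square)

lemma area_cr: "poly_area n x = (1/2) * (\<Sum>i<n. cr (x i) (x (nxt n i)))"
  unfolding poly_area_def cr_def by (simp add: algebra_simps)

definition Bf :: "nat \<Rightarrow> (nat \<Rightarrow> complex) \<Rightarrow> (nat \<Rightarrow> complex) \<Rightarrow> real" where
  "Bf n x y = (1/2) * (\<Sum>i<n. cr (x i) (y (nxt n i)) + cr (y i) (x (nxt n i)))"

lemma area_line: "poly_area n (\<lambda>i. x i + of_real t * y i) = poly_area n x + Bf n x y * t + poly_area n y * t^2"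
  unfolding area_cr Bf_def cr_line
  by (simp add: sum.distrib sum_distrib_left algebra_simps)

lemma Bf_line: "Bf n (\<lambda>i. x i + of_real s * y i) z = Bf n x z + Bf n y z * s"
proof -
  have "\<And>i. cr (x i + of_real s * y i) (z (nxt n i)) + cr (z i) (x (nxt n i) + of_real s * y (nxt n i))
     = (cr (x i) (z (nxt n i)) + cr (z i) (x (nxt n i))) + s * (cr (y i) (z (nxt n i)) + cr (z i) (y (nxt n i)))"
    unfolding cr_def by (simp add: algebra_simps)
  then show ?thesis unfolding Bf_def by (simp add: sum.distrib sum_distrib_left algebra_simps)
qed

lemma dderiv_area: "dderiv (poly_area n) v u = Bf n v u"
  unfolding dderiv_def area_line by (rule deriv_quad) simp

lemma dderiv2_area: "dderiv2 (poly_area n) v u w = Bf n w u"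
proof -
  have "\<And>s. deriv (\<lambda>t. poly_area n (\<lambda>i. v i + of_real t * u i + of_real s * w i)) 0
     = Bf n v u + Bf n w u * s"
  proof -
    fix s
    have e: "(\<lambda>i. v i + of_real t * u i + of_real s * w i) = (\<lambda>i. (v i + of_real s * w i) + of_real t * u i)" for t
      by (auto simp: algebra_simps)
    show "deriv (\<lambda>t. poly_area n (\<lambda>i. v i + of_real t * u i + of_real s * w i)) 0
     = Bf n v u + Bf n w u * s"
      unfolding e
      by (rule deriv_quad[where a = "poly_area n (\<lambda>i. v i + of_real s * w i)" and c = "poly_area n u"])
        (simp only: area_line[of n "\<lambda>i. v i + of_real s * w i"] Bf_line)
  qed
  then have eq: "(\<lambda>s. deriv (\<lambda>t. poly_area n (\<lambda>i. v i + of_real t * u i + of_real s * w i)) 0)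
     = (\<lambda>s. Bf n v u + Bf n w u * s)" by (rule ext)
  show ?thesis unfolding dderiv2_def eq by (rule deriv_quad[where c = 0]) simp
qed

lemma side_line: "side_constr n l i (\<lambda>j. x j + of_real t * y j) =
   side_constr n l i x + 2 * dt (x (nxt n i) - x i) (y (nxt n i) - y i) * t
   + dt (y (nxt n i) - y i) (y (nxt n i) - y i) * t^2"
  unfolding side_constr_def dt_def cmod_power2 by (simp add: algebra_simps power2_eq_square)

lemma dderiv_side: "dderiv (side_constr n l i) v u = 2 * dt (v (nxt n i) - v i) (u (nxt n i) - u i)"
  unfolding dderiv_def side_line by (rule deriv_quad) simp

lemma dderiv2_side: "dderiv2 (side_constr n l i) v u w = 2 * dt (w (nxt n i) - w i) (u (nxt n i) - u i)"
proof -
  have "\<And>s. deriv (\<lambda>t. side_constr n l i (\<lambda>j. v j + of_real t * u j + of_real s * w j)) 0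
     = 2 * dt (v (nxt n i) - v i) (u (nxt n i) - u i) + 2 * dt (w (nxt n i) - w i) (u (nxt n i) - u i) * s"
  proof -
    fix s
    have e: "(\<lambda>j. v j + of_real t * u j + of_real s * w j) = (\<lambda>j. (v j + of_real s * w j) + of_real t * u j)" for t
      by (auto simp: algebra_simps)
    show "deriv (\<lambda>t. side_constr n l i (\<lambda>j. v j + of_real t * u j + of_real s * w j)) 0
     = 2 * dt (v (nxt n i) - v i) (u (nxt n i) - u i) + 2 * dt (w (nxt n i) - w i) (u (nxt n i) - u i) * s"
      unfolding e
      by (rule deriv_quad[where a = "side_constr n l i (\<lambda>j. v j + of_real s * w j)" and c = "dt (u (nxt n i) - u i) (u (nxt n i) - u i)"])
        (simp only: side_line[of n l i "\<lambda>j. v j + of_real s * w j"], simp add: dt_def algebra_simps)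
  qed
  then have eq: "(\<lambda>s. deriv (\<lambda>t. side_constr n l i (\<lambda>j. v j + of_real t * u j + of_real s * w j)) 0)
     = (\<lambda>s. 2 * dt (v (nxt n i) - v i) (u (nxt n i) - u i) + 2 * dt (w (nxt n i) - w i) (u (nxt n i) - u i) * s)" by (rule ext)
  show ?thesis unfolding dderiv2_def eq by (rule deriv_quad[where c = 0]) simp
qed


lemma coll_lemma: fixes v :: "nat \<Rightarrow> complex"
  assumes "\<forall>k<n. \<exists>c. v k - v 0 = of_real c * d" shows "collinear (v ` {..<n})"
proof -
  have "\<forall>x \<in> v ` {..<n}. \<exists>c. x = v 0 + c *\<^sub>R d"
  proof
    fix x assume "x \<in> v ` {..<n}"
    then obtain k where k: "k < n" "x = v k" by auto
    then obtain c where "v k - v 0 = of_real c * d" using assms by auto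
    then show "\<exists>c. x = v 0 + c *\<^sub>R d" using k by (intro exI[of _ c]) (auto simp: scaleR_conv_of_real algebra_simps)
  qed
  then show ?thesis unfolding collinear_alt by blast
qed

lemma edges_coll: fixes v :: "nat \<Rightarrow> complex"
  assumes "\<forall>j<n. \<exists>c. v (nxt n j) - v j = of_real c * d" shows "collinear (v ` {..<n})"
proof -
  have "k < n \<Longrightarrow> \<exists>c. v k - v 0 = of_real c * d" for k
  proof (induction k)
    case 0 then show ?case by (auto intro: exI[of _ 0])
  next
    case (Suc k)
    then obtain c where c: "v k - v 0 = of_real c * d" by (meson Suc_lessD)
    have "k < n" using Suc.prems by simp
    then obtain c' where c': "v (nxt n k) - v k = of_real c' * d" using assms by auto
    have "nxt n k = Suc k" using Suc by (simp add: nxt_Suc)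
    then have "v (Suc k) - v 0 = of_real (c + c') * d" using c c' by (simp add: algebra_simps)
    then show ?case by blast
  qed
  then show ?thesis by (intro coll_lemma) auto
qed

lemma cramer: "of_real (cr a b) * x = of_real (cr x b) * a + of_real (cr a x) * b"
  unfolding cr_def by (simp add: complex_eq_iff algebra_simps)

lemma recon: assumes "dt p p = r2" "r2 \<noteq> 0"
  shows "x = of_real (dt p x / r2) * p + \<i> * of_real (cr p x / r2) * p"
  using assms unfolding dt_def cr_def
  by (auto simp: complex_eq_iff field_simps)

lemma L4: "dt (q-p) ((q + \<i> * of_real b' * q) - (p + \<i> * of_real b * p)) = dt (q-p) (q-p) + cr p q * (b' - b)"
  unfolding dt_def cr_def by (simp add: algebra_simps)

lemma cmod_dt: "(cmod x)^2 = dt x x"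
  unfolding dt_def cmod_power2 by (simp add: power2_eq_square)

lemma perp: assumes "dt A z = 0" "A \<noteq> 0" shows "z = of_real (cr A z / dt A A) * (\<i> * A)"
proof -
  have "dt A A \<noteq> 0" using assms(2) unfolding cmod_dt[symmetric] by simp
  then show ?thesis using assms(1) unfolding dt_def cr_def
    by (auto simp: complex_eq_iff field_simps) algebra+
qed

lemma dt_diff: "dt (q-p) (q-p) = dt p p + dt q q - 2 * dt p q"
  unfolding dt_def by (simp add: algebra_simps)

lemma lagr_id: "(dt p q)^2 + (cr p q)^2 = dt p p * dt q q"
  unfolding dt_def cr_def by (simp add: algebra_simps power2_eq_square)

lemma dt_cr_i: "cr e (\<i> * of_real s * e) = s * dt e e" "dt e (\<i> * of_real s * e) = 0"
  unfolding dt_def cr_def by (simp_all add: algebra_simps)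

lemma L1: assumes "dt p p = dt q q"
  shows "dt (q-p) (q-p) * cr (p + q) x = 2 * cr p q * dt (q-p) x"
  using assms unfolding dt_def cr_def by simp algebra

lemma L2: assumes "dt (q-p) (u'-u) = 0" "dt (q-p) dw = 0"
  shows "dt (q-p) (q-p) * (cr (u+u') dw / 2) - cr p q * dt dw (u'-u) = cr (q-p) dw * (dt u' q - dt u p)"
  using assms unfolding dt_def cr_def by simp algebra

lemma L3: assumes "dt p p = r2" "dt q q = r2" "dt U p = k" "dt U' q = k"
  shows "r2 * dt (q-p) (U'-U) = k * dt (q-p) (q-p) + cr p q * (cr q U' - cr p U)"
proof -
  have a: "r2 * Re U = k * Re p - cr p U * Im p" "r2 * Im U = k * Im p + cr p U * Re p"
    unfolding assms(1)[symmetric] assms(3)[symmetric] unfolding dt_def cr_def by (simp_all add: algebra_simps power2_eq_square)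
  have b: "r2 * Re U' = k * Re q - cr q U' * Im q" "r2 * Im U' = k * Im q + cr q U' * Re q"
    unfolding assms(2)[symmetric] assms(4)[symmetric] unfolding dt_def cr_def by (simp_all add: algebra_simps power2_eq_square)
  have "r2 * dt (q-p) (U'-U) = (Re q - Re p) * (r2 * Re U' - r2 * Re U) + (Im q - Im p) * (r2 * Im U' - r2 * Im U)"
    unfolding dt_def by (simp add: algebra_simps)
  also have "\<dots> = k * dt (q-p) (q-p) + cr p q * (cr q U' - cr p U)"
    unfolding a b unfolding dt_def cr_def by (simp add: algebra_simps)
  finally show ?thesis .
qed


lemma chord_nz: assumes "cmod p = r" "cmod q = r" "r > 0" "q \<noteq> p" "q \<noteq> - p"
  shows "cr p q \<noteq> 0"
proof -
  have pp: "dt p p = r^2" "dt q q = r^2" using assms cmod_dt by metis+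
  have lag: "(dt p q)^2 + (cr p q)^2 = r^2 * r^2" using lagr_id[of p q] pp by simp
  have d1: "dt (q-p) (q-p) = 2 * r^2 - 2 * dt p q" using dt_diff[of q p] pp by simp
  have d2: "dt (q+p) (q+p) = 2 * r^2 + 2 * dt p q" using pp unfolding dt_def by (simp add: algebra_simps)
  have "dt (q-p) (q-p) \<noteq> 0" using assms(4) unfolding cmod_dt[symmetric] by simp
  then have ne1: "dt p q \<noteq> r^2" using d1 by simp
  have "dt (q+p) (q+p) \<noteq> 0" using assms(5) unfolding cmod_dt[symmetric] by (auto simp: add_eq_0_iff)
  then have ne2: "dt p q + r^2 \<noteq> 0" using d2 by simp
  show "cr p q \<noteq> 0"
  proof
    assume "cr p q = 0"
    then have "(dt p q - r^2) * (dt p q + r^2) = 0" using lag by (simp add: algebra_simps power2_eq_square)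
    then show False using ne1 ne2 by simp
  qed
qed

lemma dt_sym: "dt a b = dt b a" unfolding dt_def by simp
lemma dt_minus2: "dt a (x - y) = dt a x - dt a y" unfolding dt_def by (simp add: algebra_simps)
lemma cr_minus2: "cr a (x - y) = cr a x - cr a y" unfolding cr_def by (simp add: algebra_simps)
lemma dt_one: "dt x 1 = Re x" "dt x \<i> = Im x" unfolding dt_def by simp_all

lemma Bf_sym: "Bf n x y = Bf n y x" unfolding Bf_def by (simp add: add.commute)

lemma Bf_alt: assumes "0 < n"
  shows "Bf n x y = (1/2) * (\<Sum>i<n. cr (x i + x (nxt n i)) (y (nxt n i) - y i))"
proof -
  have t: "\<And>i. cr (x i + x (nxt n i)) (y (nxt n i) - y i) =
     (cr (x i) (y (nxt n i)) + cr (y i) (x (nxt n i))) + (cr (x (nxt n i)) (y (nxt n i)) - cr (x i) (y i))"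
    unfolding cr_def by (simp add: algebra_simps)
  have "(\<Sum>i<n. cr (x (nxt n i)) (y (nxt n i)) - cr (x i) (y i)) = 0"
    using sum_shift[OF assms, of "\<lambda>i. cr (x i) (y i)"] by (simp add: sum_subtractf)
  then show ?thesis unfolding t Bf_def sum.distrib by simp
qed

lemma eps_tan: assumes "cmod p = r" "cmod q = r" "r > 0" "q \<noteq> p" "q \<noteq> - p"
  shows "(if Im (cnj (q - p) * (- p)) > 0 then 1 else - 1) * tan (arccos (Re (cnj p * q) / (cmod p * cmod q)) / 2)
     = (r^2 - dt p q) / cr p q" (is "?e * tan ?a = _")
proof -
  have pp: "dt p p = r^2" "dt q q = r^2" using assms cmod_dt by metis+
  have lag: "(dt p q)^2 + (cr p q)^2 = r^2 * r^2" using lagr_id[of p q] pp by simp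
  have d1: "dt (q-p) (q-p) = 2 * r^2 - 2 * dt p q" using dt_diff[of q p] pp by simp
  have d2: "dt (q+p) (q+p) = 2 * r^2 + 2 * dt p q" using pp unfolding dt_def by (simp add: algebra_simps)
  have "dt (q-p) (q-p) \<noteq> 0" using assms(4) unfolding cmod_dt[symmetric] by simp
  then have ne1: "dt p q \<noteq> r^2" using d1 by simp
  have "dt (q+p) (q+p) \<noteq> 0" using assms(5) unfolding cmod_dt[symmetric] by (auto simp: add_eq_0_iff)
  then have ne2: "dt p q + r^2 \<noteq> 0" using d2 by simp
  have c0: "cr p q \<noteq> 0"
  proof
    assume "cr p q = 0"
    then have "(dt p q - r^2) * (dt p q + r^2) = 0" using lag by (simp add: algebra_simps power2_eq_square)
    then show False using ne1 ne2 by simp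
  qed
  define x where "x = dt p q / r^2"
  have ax: "?a = arccos x / 2" unfolding x_def using assms
    by (simp add: dt_def power2_eq_square)
  have r4: "r^2 * r^2 > 0" using assms by simp
  have "(dt p q)^2 < r^2 * r^2" using lag c0 by (smt (verit) zero_less_power2)
  then have xb: "x^2 < 1" unfolding x_def using r4 by (simp add: power_divide field_simps power2_eq_square)
  then have xb2: "-1 < x" "x < 1" by (smt (verit) one_le_power power2_minus)+
  have x2: "x^2 = (dt p q)^2/(r^2*r^2)" unfolding x_def by (simp add: power_divide power2_eq_square)
  have "1 - x^2 = (r^2*r^2 - (dt p q)^2)/(r^2*r^2)" unfolding x2 using r4 by (simp add: field_simps)
  also have "r^2*r^2 - (dt p q)^2 = (cr p q)^2" using lag by simp
  finally have "1 - x^2 = (cr p q)^2 / (r^2 * r^2)" .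
  also have "\<dots> = (\<bar>cr p q\<bar> / r^2)^2" by (simp add: power_divide power2_eq_square)
  finally have s: "sqrt (1 - x^2) = \<bar>cr p q\<bar> / r^2" using assms by simp
  have "tan (arccos x / 2) = sin (arccos x) / (cos (arccos x) + 1)"
    using tan_half[of "arccos x / 2"] by simp
  also have "\<dots> = (\<bar>cr p q\<bar> / r^2) / (x + 1)" using xb2 s by (simp add: sin_arccos)
  finally have t: "tan ?a = (\<bar>cr p q\<bar> / r^2) / (x + 1)" unfolding ax .
  have e: "Im (cnj (q - p) * (- p)) = cr p q" unfolding cr_def by (simp add: algebra_simps)
  have "?e * \<bar>cr p q\<bar> = cr p q" unfolding e by auto
  then have "?e * tan ?a = cr p q / (dt p q + r^2)" unfolding t x_def using assms ne2
    by (simp add: field_simps)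
  also have "\<dots> = (r^2 - dt p q) / cr p q" using c0 ne2 lag
    by (simp add: field_simps power2_eq_square)
  finally show ?thesis .
qed


theorem mainTheorem10:
  fixes n :: nat and l :: "nat \<Rightarrow> real" and v :: "nat \<Rightarrow> complex" and ctr :: complex
  assumes lengths: "\<forall>i<n. l i = cmod (v (nxt n i) - v i)"
    and pos: "\<forall>i<n. l i > 0"
    and cyc: "cyclic_with_center n v ctr"
    and no_antipodal: "\<forall>i<n. v (nxt n i) - ctr \<noteq> - (v i - ctr)"
    and not_line: "\<not> collinear (v ` {..<n})"
  shows "morse_critical_area n l v \<longleftrightarrow> \<not> bifurcating n v ctr"
proof -
  have n3: "n \<ge> 3"
  proof (rule ccontr)
    assume "\<not> n \<ge> 3"
    then have "{..<n} \<subseteq> {0, 1, 2}" by auto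
    then have "v ` {..<n} \<subseteq> {v 0, v 1, v 2}" by auto
    moreover have "n \<le> 2" using \<open>\<not> n \<ge> 3\<close> by simp
    then have "{..<n} \<subseteq> {0, 1}" by auto
    then have "v ` {..<n} \<subseteq> {v 0, v 1}" by auto
    then show False using not_line collinear_subset collinear_2 by blast
  qed
  then have n0: "0 < n" by simp
  have nx: "\<And>i. nxt n i < n" using nxt_lt[OF n0] .
  obtain r where r: "\<forall>i<n. cmod (v i - ctr) = r" using cyc unfolding cyclic_with_center_def by auto
  define p where "p i = v i - ctr" for i
  define e where "e i = v (nxt n i) - v i" for i
  have ep: "\<And>i. e i = p (nxt n i) - p i" unfolding e_def p_def by simp
  have pr: "\<And>i. i < n \<Longrightarrow> cmod (p i) = r" using r p_def by simp
  have e0: "\<And>i. i < n \<Longrightarrow> e i \<noteq> 0" using pos lengths unfolding e_def by fastforce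
  have le: "\<And>i. i < n \<Longrightarrow> (l i)^2 = dt (e i) (e i)" using lengths unfolding e_def by (simp add: cmod_dt)
  have lpos: "\<And>i. i < n \<Longrightarrow> dt (e i) (e i) > 0" using le pos by (metis zero_less_power2 less_irrefl)
  have rpos: "r > 0"
  proof -
    have "r \<ge> 0" using pr[OF n0] by (metis norm_ge_zero)
    moreover have "r \<noteq> 0"
    proof
      assume "r = 0"
      then have "p 0 = 0" "p (nxt n 0) = 0" using pr n0 nx by auto
      then show False using e0[OF n0] ep by simp
    qed
    ultimately show ?thesis by simp
  qed
  have pp: "\<And>i. i < n \<Longrightarrow> dt (p i) (p i) = r^2" using pr cmod_dt by metis
  define c where "c i = cr (p i) (p (nxt n i))" for i
  define d where "d i = dt (p i) (p (nxt n i))" for i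
  define g where "g i = (r^2 - d i) / c i" for i
  have nanti: "\<And>i. i < n \<Longrightarrow> p (nxt n i) \<noteq> - p i" using no_antipodal p_def by simp
  have neq: "\<And>i. i < n \<Longrightarrow> p (nxt n i) \<noteq> p i" using e0 ep by force
  have c0: "\<And>i. i < n \<Longrightarrow> c i \<noteq> 0" unfolding c_def
    using chord_nz pr nx rpos nanti neq by blast
  have gsum: "bifurcating n v ctr \<longleftrightarrow> (\<Sum>i<n. g i) = 0"
  proof -
    have "\<And>i. i < n \<Longrightarrow> eps_side n v ctr i * tan (half_angle n v ctr i) = g i"
    proof -
      fix i assume i: "i < n"
      have a: "v (nxt n i) - v i = p (nxt n i) - p i" "ctr - v i = - p i" unfolding p_def by simp_all
      show "eps_side n v ctr i * tan (half_angle n v ctr i) = g i"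
        unfolding eps_side_def half_angle_def a g_def d_def c_def
        using eps_tan[OF pr[OF i] pr[OF nx] rpos neq[OF i] nanti[OF i]] unfolding p_def by simp
    qed
    then show ?thesis unfolding bifurcating_def by simp
  qed
  have dl: "\<And>i. i < n \<Longrightarrow> dt (e i) (e i) = 2 * (r^2 - d i)"
    unfolding ep d_def using dt_diff pp nx by (simp add: dt_sym)
  have cg: "\<And>i. i < n \<Longrightarrow> c i * g i = r^2 - d i" unfolding g_def using c0 by simp
  define lm where "lm i = c i / (2 * (l i)^2)" for i
  define T where "T = tangent_sp n l v"
  have tan_iff: "\<And>u. u \<in> T \<longleftrightarrow> (\<forall>i<n. dt (e i) (u (nxt n i) - u i) = 0)"
    unfolding T_def tangent_sp_def dderiv_side e_def by simp
  have grad: "\<forall>u. dderiv (poly_area n) v u = (\<Sum>i<n. lm i * dderiv (side_constr n l i) v u)"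
  proof
    fix u :: "nat \<Rightarrow> complex"
    define du where "du i = u (nxt n i) - u i" for i
    have s0: "(\<Sum>i<n. cr ctr (du i)) = 0" unfolding du_def
      using sum_shift[OF n0, of "\<lambda>i. cr ctr (u i)"] by (simp add: cr_minus2 sum_subtractf)
    have t: "\<And>i. i<n \<Longrightarrow> cr (v i + v (nxt n i)) (du i) = 2 * (lm i * (2 * dt (e i) (du i))) + 2 * cr ctr (du i)"
    proof -
      fix i assume i: "i<n"
      have 1: "cr (v i + v (nxt n i)) (du i) = cr (p i + p (nxt n i)) (du i) + 2 * cr ctr (du i)"
        unfolding p_def cr_def by (simp add: algebra_simps)
      have 2: "dt (e i) (e i) * cr (p i + p (nxt n i)) (du i) = 2 * c i * dt (e i) (du i)"
        unfolding ep c_def by (rule L1) (simp add: pp i nx)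
      have 3: "c i = lm i * (2 * dt (e i) (e i))"
        unfolding lm_def le[OF i] using lpos[OF i] by simp
      have "dt (e i) (e i) * cr (p i + p (nxt n i)) (du i) = dt (e i) (e i) * (2 * (lm i * (2 * dt (e i) (du i))))"
        using 2 unfolding 3 by (simp add: algebra_simps)
      then have "cr (p i + p (nxt n i)) (du i) = 2 * (lm i * (2 * dt (e i) (du i)))"
        using lpos[OF i] by simp
      then show "cr (v i + v (nxt n i)) (du i) = 2 * (lm i * (2 * dt (e i) (du i))) + 2 * cr ctr (du i)"
        using 1 by simp
    qed
    have "dderiv (poly_area n) v u = (1/2) * (\<Sum>i<n. cr (v i + v (nxt n i)) (du i))"
      by (simp add: dderiv_area Bf_alt[OF n0] du_def)
    also have "\<dots> = (1/2) * (\<Sum>i<n. 2 * (lm i * (2 * dt (e i) (du i))) + 2 * cr ctr (du i))"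
      using t by simp
    also have "\<dots> = (\<Sum>i<n. lm i * (2 * dt (e i) (du i))) + (\<Sum>i<n. cr ctr (du i))"
      by (simp add: sum.distrib sum_distrib_left[symmetric]) (simp add: sum_distrib_left algebra_simps)
    also have "\<dots> = (\<Sum>i<n. lm i * dderiv (side_constr n l i) v u)"
      using s0 unfolding dderiv_side e_def du_def by simp
    finally show "dderiv (poly_area n) v u = (\<Sum>i<n. lm i * dderiv (side_constr n l i) v u)" .
  qed
  have hess: "\<And>u w. u \<in> T \<Longrightarrow> w \<in> T \<Longrightarrow>
     dderiv2 (poly_area n) v u w - (\<Sum>i<n. lm i * dderiv2 (side_constr n l i) v u w)
     = (\<Sum>i<n. (cr (e i) (w (nxt n i) - w i) / dt (e i) (e i)) * (dt (u (nxt n i)) (p (nxt n i)) - dt (u i) (p i)))"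
  proof -
    fix u w assume uT: "u \<in> T" and wT: "w \<in> T"
    define du where "du i = u (nxt n i) - u i" for i
    define dw where "dw i = w (nxt n i) - w i" for i
    have t: "\<And>i. i<n \<Longrightarrow> cr (u i + u (nxt n i)) (dw i) / 2 - lm i * (2 * dt (dw i) (du i))
       = (cr (e i) (dw i) / dt (e i) (e i)) * (dt (u (nxt n i)) (p (nxt n i)) - dt (u i) (p i))"
    proof -
      fix i assume i: "i<n"
      have 2: "dt (e i) (e i) * (cr (u i + u (nxt n i)) (dw i) / 2) - c i * dt (dw i) (du i)
          = cr (e i) (dw i) * (dt (u (nxt n i)) (p (nxt n i)) - dt (u i) (p i))"
        unfolding ep c_def du_def
        by (rule L2) (use uT wT i in \<open>simp_all add: tan_iff ep dw_def\<close>)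
      have 3: "c i = lm i * (2 * dt (e i) (e i))"
        unfolding lm_def le[OF i] using lpos[OF i] by simp
      show "cr (u i + u (nxt n i)) (dw i) / 2 - lm i * (2 * dt (dw i) (du i))
       = (cr (e i) (dw i) / dt (e i) (e i)) * (dt (u (nxt n i)) (p (nxt n i)) - dt (u i) (p i))"
        using 2 lpos[OF i] unfolding 3 by (simp add: field_simps)
    qed
    have bf: "Bf n w u = (1/2) * (\<Sum>i<n. cr (u i + u (nxt n i)) (dw i))"
      unfolding dw_def using Bf_alt[OF n0, of u w] Bf_sym[of n w u] by simp
    have "dderiv2 (poly_area n) v u w - (\<Sum>i<n. lm i * dderiv2 (side_constr n l i) v u w)
        = (1/2) * (\<Sum>i<n. cr (u i + u (nxt n i)) (dw i)) - (\<Sum>i<n. lm i * (2 * dt (dw i) (du i)))"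
      unfolding dderiv2_area bf dderiv2_side du_def dw_def by simp
    also have "\<dots> = (\<Sum>i<n. cr (u i + u (nxt n i)) (dw i) / 2 - lm i * (2 * dt (dw i) (du i)))"
      by (simp add: sum_subtractf sum_divide_distrib)
    also have "\<dots> = (\<Sum>i<n. (cr (e i) (dw i) / dt (e i) (e i)) * (dt (u (nxt n i)) (p (nxt n i)) - dt (u i) (p i)))"
      using t by simp
    finally show "dderiv2 (poly_area n) v u w - (\<Sum>i<n. lm i * dderiv2 (side_constr n l i) v u w)
     = (\<Sum>i<n. (cr (e i) (w (nxt n i) - w i) / dt (e i) (e i)) * (dt (u (nxt n i)) (p (nxt n i)) - dt (u i) (p i)))"
      unfolding dw_def .
  qed
  have morse_if: "(\<Sum>i<n. g i) \<noteq> 0 \<Longrightarrow> morse_critical_area n l v"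
  proof -
    assume ng: "(\<Sum>i<n. g i) \<noteq> 0"
    obtain a b where ab: "a < n" "b < n" "cr (e a) (e b) \<noteq> 0"
    proof (rule ccontr)
      assume "\<not> thesis"
      then have allz: "\<And>a b. a < n \<Longrightarrow> b < n \<Longrightarrow> cr (e a) (e b) = 0" using that by blast
      have "\<forall>j<n. \<exists>cc. v (nxt n j) - v j = of_real cc * e 0"
      proof (intro allI impI)
        fix j assume j: "j < n"
        have "dt (e 0) (e 0) \<noteq> 0" using lpos[OF n0] by simp
        from recon[OF refl this, of "e j"] allz[OF n0 j]
        have "e j = of_real (dt (e 0) (e j) / dt (e 0) (e 0)) * e 0" by simp
        then show "\<exists>cc. v (nxt n j) - v j = of_real cc * e 0" unfolding e_def by blast
      qed
      then show False using edges_coll not_line by blast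
    qed
    define D where "D = cr (e a) (e b)"
    have D0: "D \<noteq> 0" using ab D_def by simp
    have side0: "\<forall>i<n. side_constr n l i v = 0"
      using lengths unfolding side_constr_def by simp
    show "morse_critical_area n l v"
      unfolding morse_critical_area_def
    proof (intro conjI exI[of _ lm] ballI impI side0 grad)
      fix u assume uT': "u \<in> tangent_sp n l v"
      then have uT: "u \<in> T" unfolding T_def .
      assume rad': "\<forall>w\<in>tangent_sp n l v.
             dderiv2 (poly_area n) v u w - (\<Sum>i<n. lm i * dderiv2 (side_constr n l i) v u w) = 0"
      then have rad: "\<And>w. w \<in> T \<Longrightarrow> (\<Sum>i<n. (cr (e i) (w (nxt n i) - w i) / dt (e i) (e i)) * (dt (u (nxt n i)) (p (nxt n i)) - dt (u i) (p i))) = 0"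
        using hess[OF uT] unfolding T_def by simp
      define \<rho> where "\<rho> i = dt (u i) (p i)" for i
      define \<delta> where "\<delta> i = \<rho> (nxt n i) - \<rho> i" for i
      have key: "\<And>k. k < n \<Longrightarrow> D * \<delta> k = cr (e k) (e b) * \<delta> a + cr (e a) (e k) * \<delta> b"
      proof -
        fix k assume k: "k < n"
        define s where "s m = (if m = k then D else 0) - (if m = a then cr (e k) (e b) else 0) - (if m = b then cr (e a) (e k) else 0)" for m
        define F where "F m = \<i> * of_real (s m) * e m" for m
        have sF: "(\<Sum>m<n. F m) = 0"
        proof -
          have Fm: "F m = \<i> * ((if m = k then of_real D * e k else 0) - (if m = a then of_real (cr (e k) (e b)) * e a else 0)
              - (if m = b then of_real (cr (e a) (e k)) * e b else 0))" for m
            unfolding F_def s_def by (simp add: algebra_simps)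
          have "(\<Sum>m<n. F m) = \<i> * ((\<Sum>m<n. (if m = k then of_real D * e k else 0)) - (\<Sum>m<n. (if m = a then of_real (cr (e k) (e b)) * e a else 0))
              - (\<Sum>m<n. (if m = b then of_real (cr (e a) (e k)) * e b else 0)))"
            unfolding Fm by (simp only: sum_distrib_left[symmetric] sum_subtractf)
          also have "\<dots> = \<i> * (of_real D * e k - of_real (cr (e k) (e b)) * e a - of_real (cr (e a) (e k)) * e b)"
            using k ab by simp
          also have "\<dots> = 0" unfolding D_def using cramer[of "e a" "e b" "e k"] by simp
          finally show ?thesis .
        qed
        define w where "w j = (\<Sum>m<j. F m)" for j
        have dw: "\<And>m. m < n \<Longrightarrow> w (nxt n m) - w m = F m" unfolding w_def using prefix[OF n0 sF] by blast
        have wT: "w \<in> T" unfolding tan_iff using dw by (simp add: F_def dt_cr_i)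
        have "0 = (\<Sum>m<n. (cr (e m) (w (nxt n m) - w m) / dt (e m) (e m)) * \<delta> m)"
          using rad[OF wT] unfolding \<delta>_def \<rho>_def by simp
        also have "\<dots> = (\<Sum>m<n. s m * \<delta> m)"
        proof (rule sum.cong)
          fix m assume "m \<in> {..<n}"
          then have m: "m < n" by simp
          have "cr (e m) (w (nxt n m) - w m) = s m * dt (e m) (e m)" unfolding dw[OF m] F_def dt_cr_i ..
          then show "(cr (e m) (w (nxt n m) - w m) / dt (e m) (e m)) * \<delta> m = s m * \<delta> m"
            using lpos[OF m] by simp
        qed simp
        also have "\<dots> = (\<Sum>m<n. (if m = k then D * \<delta> k else 0)) - (\<Sum>m<n. (if m = a then cr (e k) (e b) * \<delta> a else 0))
              - (\<Sum>m<n. (if m = b then cr (e a) (e k) * \<delta> b else 0))"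
        proof -
          have sm: "s m * \<delta> m = (if m = k then D * \<delta> k else 0) - (if m = a then cr (e k) (e b) * \<delta> a else 0)
              - (if m = b then cr (e a) (e k) * \<delta> b else 0)" for m
            unfolding s_def by (simp add: algebra_simps)
          show ?thesis unfolding sm by (simp add: sum_subtractf)
        qed
        also have "\<dots> = D * \<delta> k - cr (e k) (e b) * \<delta> a - cr (e a) (e k) * \<delta> b"
          using k ab by simp
        finally show "D * \<delta> k = cr (e k) (e b) * \<delta> a + cr (e a) (e k) * \<delta> b" by simp
      qed
      define \<mu> where "\<mu> = of_real (\<delta> a / D) * (- \<i> * e b) + of_real (\<delta> b / D) * (\<i> * e a)"
      have dmu: "\<And>k. k < n \<Longrightarrow> \<delta> k = dt \<mu> (e k)"
      proof -
        fix k assume k: "k < n"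
        have "dt \<mu> (e k) = (cr (e k) (e b) * \<delta> a + cr (e a) (e k) * \<delta> b) / D"
          unfolding \<mu>_def dt_def cr_def using D0 by (simp add: field_simps)
        then have "D * \<delta> k = D * dt \<mu> (e k)" using key[OF k] D0 by (simp add: field_simps)
        then show "\<delta> k = dt \<mu> (e k)" using D0 by simp
      qed
      define \<phi> where "\<phi> i = \<rho> i - dt \<mu> (p i)" for i
      have "\<forall>k<n. \<phi> (nxt n k) = \<phi> k"
      proof (intro allI impI)
        fix k assume k: "k < n"
        have "\<rho> (nxt n k) - \<rho> k = dt \<mu> (p (nxt n k)) - dt \<mu> (p k)"
          using dmu[OF k] unfolding \<delta>_def ep dt_minus2 .
        then show "\<phi> (nxt n k) = \<phi> k" unfolding \<phi>_def by simp
      qed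
      note phic = const_cyc[OF this]
      define \<kappa> where "\<kappa> = \<phi> 0"
      define u' where "u' i = u i - \<mu>" for i
      have u'p: "dt (u' i) (p i) = \<kappa>" if i: "i < n" for i
      proof -
        have "\<phi> i = \<phi> 0" by (rule phic[OF i])
        then have "dt (u i) (p i) - dt \<mu> (p i) = \<kappa>" unfolding \<phi>_def \<rho>_def \<kappa>_def .
        then show ?thesis unfolding u'_def dt_def by (simp add: algebra_simps)
      qed
      define B where "B i = cr (p i) (u' i)" for i
      have dB: "\<And>i. i < n \<Longrightarrow> B (nxt n i) - B i = - 2 * \<kappa> * g i"
      proof -
        fix i assume i: "i < n"
        have "r^2 * dt (p (nxt n i) - p i) (u' (nxt n i) - u' i) = \<kappa> * dt (p (nxt n i) - p i) (p (nxt n i) - p i)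
             + cr (p i) (p (nxt n i)) * (cr (p (nxt n i)) (u' (nxt n i)) - cr (p i) (u' i))"
          by (rule L3[OF pp[OF i] pp[OF nx] u'p[OF i] u'p[OF nx]])
        moreover have "dt (p (nxt n i) - p i) (u' (nxt n i) - u' i) = 0"
          using uT i unfolding tan_iff ep u'_def by simp
        ultimately have "c i * (B (nxt n i) - B i) = - \<kappa> * dt (e i) (e i)"
          unfolding B_def c_def ep by simp
        also have "\<dots> = c i * (- 2 * \<kappa> * g i)" using dl[OF i] cg[OF i] by simp
        finally have "c i * (B (nxt n i) - B i) = c i * (- 2 * \<kappa> * g i)" .
        then show "B (nxt n i) - B i = - 2 * \<kappa> * g i" using c0[OF i] mult_cancel_left by blast
      qed
      have "0 = (\<Sum>i<n. B (nxt n i) - B i)" using sum_shift[OF n0, of B] by (simp add: sum_subtractf)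
      also have "\<dots> = (\<Sum>i<n. - 2 * \<kappa> * g i)" using dB by simp
      also have "\<dots> = - 2 * \<kappa> * (\<Sum>i<n. g i)" by (simp add: sum_distrib_left)
      finally have k0: "\<kappa> = 0" using ng by simp
      have "\<forall>i<n. B (nxt n i) = B i" using dB k0 by simp
      note Bc = const_cyc[OF this]
      have r20: "r^2 \<noteq> 0" using rpos by simp
      define K where "K = B 0 / r^2"
      have "\<forall>i<n. u i = (\<mu> - of_real K * \<i> * ctr) + of_real K * \<i> * v i"
      proof (intro allI impI)
        fix i assume i: "i < n"
        have "u' i = of_real (dt (p i) (u' i) / r^2) * p i + \<i> * of_real (cr (p i) (u' i) / r^2) * p i"
          by (rule recon[OF pp[OF i] r20])
        also have "\<dots> = \<i> * of_real K * p i"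
          using u'p[OF i] k0 Bc[OF i] unfolding B_def K_def by (simp add: dt_sym)
        finally have "u i - \<mu> = \<i> * of_real K * (v i - ctr)" unfolding u'_def p_def .
        then show "u i = (\<mu> - of_real K * \<i> * ctr) + of_real K * \<i> * v i"
          by (simp add: algebra_simps)
      qed
      then show "u \<in> orbit_tangent n v" unfolding orbit_tangent_def by blast
    qed
  qed
  have morse_only: "morse_critical_area n l v \<Longrightarrow> (\<Sum>i<n. g i) \<noteq> 0"
  proof
    assume M: "morse_critical_area n l v" and gz: "(\<Sum>i<n. g i) = 0"
    obtain lam where lg: "\<forall>u. dderiv (poly_area n) v u = (\<Sum>i<n. lam i * dderiv (side_constr n l i) v u)"
      and lrad: "\<forall>u \<in> T. (\<forall>w \<in> T. dderiv2 (poly_area n) v u w - (\<Sum>i<n. lam i * dderiv2 (side_constr n l i) v u w) = 0)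
           \<longrightarrow> u \<in> orbit_tangent n v"
      using M unfolding morse_critical_area_def T_def by blast
    have lam_eq: "\<And>i. i < n \<Longrightarrow> lam i = lm i"
    proof -
      define \<mu> where "\<mu> i = lam i - lm i" for i
      have Z: "\<And>u. (\<Sum>i<n. \<mu> i * dt (e i) (u (nxt n i) - u i)) = 0"
      proof -
        fix u :: "nat \<Rightarrow> complex"
        have "(\<Sum>i<n. lam i * dderiv (side_constr n l i) v u) = (\<Sum>i<n. lm i * dderiv (side_constr n l i) v u)"
          using lg grad by metis
        then have "2 * (\<Sum>i<n. lam i * dt (e i) (u (nxt n i) - u i)) = 2 * (\<Sum>i<n. lm i * dt (e i) (u (nxt n i) - u i))"
          unfolding dderiv_side e_def by (simp add: sum_distrib_left algebra_simps)
        then show "(\<Sum>i<n. \<mu> i * dt (e i) (u (nxt n i) - u i)) = 0"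
          unfolding \<mu>_def by (simp add: algebra_simps sum_subtractf)
      qed
      define C where "C = of_real (\<mu> (n - 1)) * e (n - 1)"
      have Cj: "\<And>j. j < n \<Longrightarrow> of_real (\<mu> j) * e j = C"
      proof -
        fix j assume j: "j < n"
        show "of_real (\<mu> j) * e j = C"
        proof (cases "j = n - 1")
          case True then show ?thesis unfolding C_def by simp
        next
          case False
          then have jl: "Suc j < n" using j by simp
          have zz: "\<mu> j * dt (e j) z = \<mu> (n - 1) * dt (e (n - 1)) z" for z
          proof -
            define u where "u i = (if i \<le> j then z else 0)" for i
            have t: "\<mu> i * dt (e i) (u (nxt n i) - u i) =
                (if i = n - 1 then \<mu> (n - 1) * dt (e (n - 1)) z else 0) - (if i = j then \<mu> j * dt (e j) z else 0)"
              if i: "i < n" for i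
            proof (cases "i = n - 1")
              case True
              then have "nxt n i = 0" using n0 by (simp add: nxt_def)
              then show ?thesis using True False j unfolding u_def by (simp add: dt_def)
            next
              case F2: False
              then have "nxt n i = Suc i" using i by (simp add: nxt_Suc)
              then show ?thesis using F2 jl unfolding u_def by (auto simp: dt_def algebra_simps)
            qed
            have "0 = (\<Sum>i<n. \<mu> i * dt (e i) (u (nxt n i) - u i))" using Z by simp
            also have "\<dots> = (\<Sum>i<n. (if i = n - 1 then \<mu> (n - 1) * dt (e (n - 1)) z else 0) - (if i = j then \<mu> j * dt (e j) z else 0))"
              using t by simp
            also have "\<dots> = \<mu> (n - 1) * dt (e (n - 1)) z - \<mu> j * dt (e j) z"
              using j n0 by (simp add: sum_subtractf)
            finally show ?thesis by simp
          qed
          have "Re (of_real (\<mu> j) * e j) = Re C" "Im (of_real (\<mu> j) * e j) = Im C"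
            using zz[of 1] zz[of \<i>] unfolding C_def dt_one by simp_all
          then show ?thesis by (simp add: complex_eq_iff)
        qed
      qed
      fix i assume i: "i < n"
      show "lam i = lm i"
      proof (cases "C = 0")
        case True
        then have "of_real (\<mu> i) * e i = 0" using Cj[OF i] by simp
        then show ?thesis using e0[OF i] unfolding \<mu>_def by simp
      next
        case False
        have "\<forall>j<n. \<exists>cc. v (nxt n j) - v j = of_real cc * C"
        proof (intro allI impI)
          fix j assume j: "j < n"
          have "\<mu> j \<noteq> 0" using Cj[OF j] False by auto
          then have "e j = of_real (1 / \<mu> j) * C" using Cj[OF j] by (auto simp: field_simps)
          then show "\<exists>cc. v (nxt n j) - v j = of_real cc * C" unfolding e_def by blast
        qed
        then show ?thesis using edges_coll not_line by blast
      qed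
    qed
    define \<beta> where "\<beta> i = (\<Sum>j<i. - 2 * g j)" for i
    have sg: "(\<Sum>j<n. - 2 * g j) = 0" using gz by (simp add: sum_negf sum_distrib_left[symmetric])
    have d\<beta>: "\<And>i. i < n \<Longrightarrow> \<beta> (nxt n i) - \<beta> i = - 2 * g i"
      unfolding \<beta>_def using prefix[OF n0 sg] by blast
    define u where "u i = p i + \<i> * of_real (\<beta> i) * p i" for i
    have uT: "u \<in> T" unfolding tan_iff
    proof (intro allI impI)
      fix i assume i: "i < n"
      have "dt (e i) (u (nxt n i) - u i) = dt (e i) (e i) + c i * (\<beta> (nxt n i) - \<beta> i)"
        unfolding u_def ep c_def by (rule L4)
      also have "\<dots> = 0"
      proof -
        have "c i * (\<beta> (nxt n i) - \<beta> i) = - 2 * (c i * g i)" using d\<beta>[OF i] by simp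
        then show ?thesis using dl[OF i] cg[OF i] by simp
      qed
      finally show "dt (e i) (u (nxt n i) - u i) = 0" .
    qed
    have \<rho>: "\<And>i. i < n \<Longrightarrow> dt (u i) (p i) = r^2"
    proof -
      fix i assume i: "i < n"
      have "dt (u i) (p i) = dt (p i) (p i)" unfolding u_def dt_def by (simp add: algebra_simps)
      then show "dt (u i) (p i) = r^2" using pp[OF i] by simp
    qed
    have "\<forall>w \<in> T. dderiv2 (poly_area n) v u w - (\<Sum>i<n. lam i * dderiv2 (side_constr n l i) v u w) = 0"
    proof
      fix w assume wT: "w \<in> T"
      have "(\<Sum>i<n. lam i * dderiv2 (side_constr n l i) v u w) = (\<Sum>i<n. lm i * dderiv2 (side_constr n l i) v u w)"
        using lam_eq by simp
      then have "dderiv2 (poly_area n) v u w - (\<Sum>i<n. lam i * dderiv2 (side_constr n l i) v u w)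
          = (\<Sum>i<n. (cr (e i) (w (nxt n i) - w i) / dt (e i) (e i)) * (dt (u (nxt n i)) (p (nxt n i)) - dt (u i) (p i)))"
        using hess[OF uT wT] by simp
      also have "\<dots> = 0" using \<rho> nx by simp
      finally show "dderiv2 (poly_area n) v u w - (\<Sum>i<n. lam i * dderiv2 (side_constr n l i) v u w) = 0" .
    qed
    then have "u \<in> orbit_tangent n v" using lrad uT by blast
    then obtain a cc where acc: "\<forall>i<n. u i = a + of_real cc * \<i> * v i" unfolding orbit_tangent_def by blast
    define A where "A = a + of_real cc * \<i> * ctr"
    have Ap: "\<And>i. i < n \<Longrightarrow> dt A (p i) = r^2"
    proof -
      fix i assume i: "i < n"
      have "u i = A + of_real cc * \<i> * p i" using acc i unfolding A_def p_def by (simp add: algebra_simps)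
      then have "dt (u i) (p i) = dt A (p i)" unfolding dt_def by (simp add: algebra_simps)
      then show "dt A (p i) = r^2" using \<rho>[OF i] by simp
    qed
    have A0: "A \<noteq> 0"
    proof
      assume "A = 0"
      then have "dt A (p 0) = 0" unfolding dt_def by simp
      then show False using Ap[OF n0] rpos by simp
    qed
    have "\<forall>k<n. \<exists>cc. v k - v 0 = of_real cc * (\<i> * A)"
    proof (intro allI impI)
      fix k assume k: "k < n"
      have "dt A (p k - p 0) = 0" using Ap[OF k] Ap[OF n0] by (simp add: dt_minus2)
      from perp[OF this A0] have "p k - p 0 = of_real (cr A (p k - p 0) / dt A A) * (\<i> * A)" .
      moreover have "p k - p 0 = v k - v 0" unfolding p_def by simp
      ultimately show "\<exists>cc. v k - v 0 = of_real cc * (\<i> * A)" by metis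
    qed
    then show False using coll_lemma not_line by blast
  qed
  show ?thesis using gsum morse_if morse_only by blast
qed

end
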